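(* Let $a>0$, $b>0$, $G_\beta(x,y)=\left(y,-x+\frac{y}{\beta+y^2}\right)$ for $\beta>0$, and $G_{b,a}=G_b\circ G_a$. Then $G_{b,a}$ has points of (minimal) period $2$ if and only if $0<ab<1/16$. Moreover, in that case the set of points of period $2$ is the level set $\{V_{b,a}(x,y)=-ab\}$, which consists of two ovals, where $V_{b,a}(x,y)=ax^2+by^2-xy+x^2y^2$. *)

theory Defs
  imports "HOL-Analysis.Analysis"
begin

definition G :: "real \<Rightarrow> real \<times> real \<Rightarrow> real \<times> real" where
  "G \<beta> p = (snd p, - fst p + snd p / (\<beta> + (snd p)\<^sup>2))"

definition Gba :: "real \<Rightarrow> real \<Rightarrow> real \<times> real \<Rightarrow> real \<times> real" where
  "Gba b a = G b \<circ> G a"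

definition V :: "real \<Rightarrow> real \<Rightarrow> real \<times> real \<Rightarrow> real" where
  "V b a p = a * (fst p)\<^sup>2 + b * (snd p)\<^sup>2 - fst p * snd p + (fst p)\<^sup>2 * (snd p)\<^sup>2"

definition period2 :: "('a \<Rightarrow> 'a) \<Rightarrow> 'a \<Rightarrow> bool" where
  "period2 F p \<longleftrightarrow> F (F p) = p \<and> F p \<noteq> p"

definition oval :: "(real \<times> real) set \<Rightarrow> bool" where
  "oval C \<longleftrightarrow> C homeomorphic sphere (0::real \<times> real) 1"

definition two_ovals :: "(real \<times> real) set \<Rightarrow> bool" where
  "two_ovals S \<longleftrightarrow> (\<exists>C1 C2. oval C1 \<and> oval C2 \<and> C1 \<inter> C2 = {} \<and> S = C1 \<union> C2)"

end

theory Submission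
  imports Defs
begin


lemma V_iff: "V b a (x,y) = - (a*b) \<longleftrightarrow> (x^2+b)*(y^2+a) = x*y"
  unfolding V_def by (auto simp: algebra_simps)

lemma per2_level:
  assumes a: "a>0" and b: "b>0" and P: "period2 (Gba b a) (x,y)"
  shows "(x^2+b)*(y^2+a) = x*y"
proof -
  define z where "z = -x + y/(a+y^2)"
  define w where "w = -y + z/(b+z^2)"
  have g1: "Gba b a (x,y) = (z,w)" by (simp add: Gba_def G_def z_def w_def)
  define s where "s = -z + w/(a+w^2)"
  define r where "r = -w + s/(b+s^2)"
  have g2: "Gba b a (z,w) = (s,r)" by (simp add: Gba_def G_def s_def r_def)
  from P g1 g2 have sx: "s = x" and ry: "r = y" and ne: "(z,w) \<noteq> (x,y)"
    by (auto simp: period2_def)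
  have pa: "a + y^2 > 0" "a + w^2 > 0" "b+z^2>0" "b+x^2>0"
    using a b by (auto intro: add_pos_nonneg)
  have xz: "x + z = y/(a+y^2)" using z_def by simp
  have e1: "y/(a+y^2) = w/(a+w^2)" using sx s_def xz by simp
  have yw: "y + w = z/(b+z^2)" using w_def by simp
  have e2: "x/(b+x^2) = y + w" using ry r_def sx by simp
  have c1: "w = y \<or> w*y = a"
  proof -
    from e1 pa have "y*(a+w^2) = w*(a+y^2)" by (simp add: field_simps)
    hence "(y-w)*(a-y*w) = 0" by (simp add: algebra_simps power2_eq_square)
    hence "y - w = 0 \<or> a - y*w = 0" by simp
    thus ?thesis by (auto simp: mult.commute)
  qed
  have c2: "z = x \<or> z*x = b"
  proof -
    from e2 yw have "x/(b+x^2) = z/(b+z^2)" by simp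
    with pa have "x*(b+z^2) = z*(b+x^2)" by (simp add: field_simps)
    hence "(x-z)*(b-x*z) = 0" by (simp add: algebra_simps power2_eq_square)
    hence "x - z = 0 \<or> b - x*z = 0" by simp
    thus ?thesis by (auto simp: mult.commute)
  qed
  show ?thesis
  proof (cases "z*x = b")
    case True
    then have x0: "x \<noteq> 0" using b by auto
    have zb: "z = b/x" using True x0 by (simp add: field_simps)
    have "y/(a+y^2) = x + b/x" using xz zb by simp
    also have "\<dots> = (x^2+b)/x" using x0 by (simp add: field_simps power2_eq_square)
    finally have "y/(a+y^2) = (x^2+b)/x" .
    then have "y*x = (x^2+b)*(a+y^2)" using x0 pa by (simp add: frac_eq_eq)
    then show ?thesis by (simp add: algebra_simps)
  next
    case False
    with c2 have "z = x" by auto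
    with ne c1 have wy: "w*y = a" by auto
    then have y0: "y \<noteq> 0" using a by auto
    have wa: "w = a/y" using wy y0 by (simp add: field_simps)
    have "x/(b+x^2) = y + a/y" using e2 wa by simp
    also have "\<dots> = (y^2+a)/y" using y0 by (simp add: field_simps power2_eq_square)
    finally have "x/(b+x^2) = (y^2+a)/y" .
    then have "x*y = (y^2+a)*(b+x^2)" using y0 pa by (simp add: frac_eq_eq)
    then show ?thesis by (simp add: algebra_simps)
  qed
qed

lemma level_G:
  fixes a b x y :: real
  assumes a: "a>0" and b: "b>0" and L: "(x^2+b)*(y^2+a) = x*y"
  shows "x \<noteq> 0" "y \<noteq> 0" "Gba b a (x,y) = (b/x, a/y)"
proof -
  have pa: "a + y^2 > 0" "b+x^2>0" using a b by (auto intro: add_pos_nonneg)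
  have "(x^2+b)*(y^2+a) > 0" using pa by (simp add: add.commute)
  then have xy: "x*y \<noteq> 0" using L by auto
  then show x0: "x \<noteq> 0" and y0: "y \<noteq> 0" by auto
  have z: "-x + y/(a+y^2) = b/x"
  proof -
    have "y/(a+y^2) = (x^2+b)/x" using L pa x0 by (simp add: field_simps)
    thus ?thesis using x0 by (simp add: field_simps power2_eq_square)
  qed
  have w: "-y + (b/x)/(b+(b/x)^2) = a/y"
  proof -
    have d: "b+(b/x)^2 = b*(x^2+b)/x^2" using x0 by (simp add: field_simps power2_eq_square)
    define c where "c = b/x"
    have cx: "b = c*x" using x0 by (simp add: c_def)
    have d0: "b+c^2 \<noteq> 0" using b by (smt (verit) zero_le_power2)
    have d1: "x^2+b \<noteq> 0" using pa by simp
    have "c/(b+c^2) = x/(x^2+b)" using d0 d1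
      by (simp add: frac_eq_eq cx algebra_simps power2_eq_square)
    then have "(b/x)/(b+(b/x)^2) = x/(x^2+b)" by (simp add: c_def)
    also have "\<dots> = (y^2+a)/y" using L pa y0 by (simp add: field_simps)
    finally show ?thesis using y0 by (simp add: field_simps power2_eq_square)
  qed
  have "Gba b a (x,y) = G b (G a (x,y))" by (simp add: Gba_def)
  also have "G a (x,y) = (y, b/x)" unfolding G_def fst_conv snd_conv z ..
  also have "G b (y, b/x) = (b/x, a/y)" unfolding G_def fst_conv snd_conv w ..
  finally show "Gba b a (x,y) = (b/x, a/y)" .
qed

lemma level_sym:
  fixes a b x y :: real
  assumes a: "a>0" and b: "b>0" and L: "(x^2+b)*(y^2+a) = x*y"
  shows "((b/x)^2+b)*((a/y)^2+a) = (b/x)*(a/y)"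
proof -
  have x0: "x\<noteq>0" and y0: "y\<noteq>0" using level_G[OF a b L] by auto
  have "((b/x)^2+b)*((a/y)^2+a) = a*b*((x^2+b)*(y^2+a))/(x^2*y^2)"
    using x0 y0 by (simp add: field_simps power2_eq_square)
  also have "\<dots> = (b/x)*(a/y)" using x0 y0 L by (simp add: field_simps power2_eq_square)
  finally show ?thesis .
qed

lemma level_bound:
  fixes a b x y :: real
  assumes a: "a>0" and b: "b>0" and L: "(x^2+b)*(y^2+a) = x*y"
  shows "16*a*b \<le> 1" "16*a*b = 1 \<Longrightarrow> x^2 = b \<and> y^2 = a"
proof -
  have x0: "x\<noteq>0" and y0: "y\<noteq>0" using level_G[OF a b L] by auto
  have X: "(x^2+b)^2 \<ge> 4*b*x^2"
  proof -
    have "(x^2+b)^2 - 4*b*x^2 = (x^2-b)^2" by (simp add: power2_eq_square algebra_simps)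
    thus ?thesis using zero_le_power2[of "x^2-b"] by linarith
  qed
  have Y: "(y^2+a)^2 \<ge> 4*a*y^2"
  proof -
    have "(y^2+a)^2 - 4*a*y^2 = (y^2-a)^2" by (simp add: power2_eq_square algebra_simps)
    thus ?thesis using zero_le_power2[of "y^2-a"] by linarith
  qed
  have XY: "(x^2+b)^2*(y^2+a)^2 = x^2*y^2" using L by (metis power_mult_distrib)
  have pos: "x^2*y^2 > 0" using x0 y0 by simp
  have "(4*b*x^2)*(4*a*y^2) \<le> (x^2+b)^2*(y^2+a)^2"
    by (rule mult_mono[OF X Y]) (use a b in auto)
  then have "16*a*b*(x^2*y^2) \<le> 1 * (x^2*y^2)" using XY by (simp add: algebra_simps)
  then show "16*a*b \<le> 1" using pos by (simp only: mult_le_cancel_right)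
  assume e: "16*a*b = 1"
  show "x^2 = b \<and> y^2 = a"
  proof (rule ccontr)
    assume "\<not> (x^2 = b \<and> y^2 = a)"
    then have "(x^2-b)^2 > 0 \<or> (y^2-a)^2 > 0" by auto
    then have "(x^2+b)^2 > 4*b*x^2 \<or> (y^2+a)^2 > 4*a*y^2"
      by (auto simp: algebra_simps power2_eq_square)
    then have "(4*b*x^2)*(4*a*y^2) < (x^2+b)^2*(y^2+a)^2"
    proof
      assume h: "(x^2+b)^2 > 4*b*x^2"
      have "(4*b*x^2)*(4*a*y^2) \<le> (4*b*x^2)*(y^2+a)^2" using Y b by (intro mult_left_mono) auto
      also have "\<dots> < (x^2+b)^2*(y^2+a)^2"
      proof (rule mult_strict_right_mono[OF h])
        have "y^2 + a > 0" using a by (simp add: add_nonneg_pos)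
        then show "(y^2+a)^2 > 0" by simp
      qed
      finally show ?thesis .
    next
      assume h: "(y^2+a)^2 > 4*a*y^2"
      have "(4*b*x^2)*(4*a*y^2) < (4*b*x^2)*(y^2+a)^2" using h b x0 by (intro mult_strict_left_mono) auto
      also have "\<dots> \<le> (x^2+b)^2*(y^2+a)^2" using X by (intro mult_right_mono) auto
      finally show ?thesis .
    qed
    then have "16*a*b*(x^2*y^2) < x^2*y^2" using XY by (simp add: algebra_simps)
    then show False using e by simp
  qed
qed



definition FF :: "real \<times> real \<Rightarrow> real" where
  "FF p = (exp (fst p) + exp (- fst p)) * (exp (snd p) + exp (- snd p))"

lemma FF_expand: "FF (t,s) = exp(t+s) + exp(-t-s) + exp(t-s) + exp(s-t)"
  unfolding FF_def by (simp add: algebra_simps exp_add[symmetric] exp_diff[symmetric])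

lemma FF_convex:
  fixes u :: real and p q :: "real \<times> real"
  assumes u: "0 \<le> u" "u \<le> 1"
  shows "FF ((1-u) *\<^sub>R p + u *\<^sub>R q) \<le> (1-u) * FF p + u * FF q"
proof -
  obtain t1 v1 where p: "p = (t1,v1)" by (cases p)
  obtain t2 v2 where q: "q = (t2,v2)" by (cases q)
  have h: "\<And>x y z. z = (1-u)*x + u*y \<Longrightarrow> exp z \<le> (1-u)*exp x + u*exp y"
    using convex_onD[OF exp_convex, of u] u by simp
  let ?t = "(1-u) * t1 + u * t2" and ?ss = "(1-u) * v1 + u * v2"
  have pt: "(1-u) *\<^sub>R p + u *\<^sub>R q = (?t, ?ss)" by (simp add: p q)
  have 1: "exp(?t+?ss) \<le> (1-u)*exp(t1+v1) + u*exp(t2+v2)" by (rule h) (simp add: algebra_simps)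
  have 2: "exp(-?t-?ss) \<le> (1-u)*exp(-t1-v1) + u*exp(-t2-v2)" by (rule h) (simp add: algebra_simps)
  have 3: "exp(?t-?ss) \<le> (1-u)*exp(t1-v1) + u*exp(t2-v2)" by (rule h) (simp add: algebra_simps)
  have 4: "exp(?ss-?t) \<le> (1-u)*exp(v1-t1) + u*exp(v2-t2)" by (rule h) (simp add: algebra_simps)
  have L: "FF (?t, ?ss) = exp(?t+?ss)+exp(-?t-?ss)+exp(?t-?ss)+exp(?ss-?t)" by (rule FF_expand)
  have R: "(1-u)*FF(t1,v1) + u*FF(t2,v2) = ((1-u)*exp(t1+v1) + u*exp(t2+v2))
     + ((1-u)*exp(-t1-v1) + u*exp(-t2-v2)) + ((1-u)*exp(t1-v1) + u*exp(t2-v2))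
     + ((1-u)*exp(v1-t1) + u*exp(v2-t2))"
    unfolding FF_expand by (simp add: algebra_simps)
  have L2: "FF((1-u) *\<^sub>R p + u *\<^sub>R q) = FF(?t,?ss)" using pt by simp
  have R2: "(1-u)*FF p + u*FF q = (1-u)*FF(t1,v1) + u*FF(t2,v2)" using p q by simp
  show ?thesis unfolding L2 R2 L R using 1 2 3 4 by linarith
qed

lemma FF_cont: "continuous_on S FF"
  unfolding FF_def by (intro continuous_intros)

lemma FF_ge: "FF (t,s) \<ge> \<bar>t\<bar>" "FF (t,s) \<ge> \<bar>s\<bar>" "FF (t,s) \<ge> 4" "FF (0,0) = 4"
proof -
  have A: "\<And>x::real. exp x + exp(-x) \<ge> 1 + \<bar>x\<bar>"
    using exp_ge_add_one_self by (smt (verit) exp_gt_zero)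
  have B: "\<And>x::real. exp x + exp(-x) \<ge> 2"
    using exp_ge_add_one_self by (smt (verit))
  have C: "\<And>x y::real. (exp x + exp(-x)) * (exp y + exp(-y)) \<ge> 2 * (exp x + exp(-x))"
  proof -
    fix x y :: real
    have "0 \<le> exp x + exp(-x)" by (simp add: add_nonneg_nonneg)
    from mult_left_mono[OF B[of y] this] show "(exp x + exp(-x)) * (exp y + exp(-y)) \<ge> 2 * (exp x + exp(-x))"
      by (simp add: mult.commute)
  qed
  have C': "\<And>x y::real. (exp x + exp(-x)) * (exp y + exp(-y)) \<ge> 2 * (exp y + exp(-y))"
    using C by (metis mult.commute)
  have lin: "\<And>P Q t::real. 1+\<bar>t\<bar> \<le> P \<Longrightarrow> 2*P \<le> P*Q \<Longrightarrow> \<bar>t\<bar> \<le> P*Q" by linarith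
  have lin2: "\<And>P Q::real. 2 \<le> P \<Longrightarrow> 2*P \<le> P*Q \<Longrightarrow> 4 \<le> P*Q" by linarith
  have cm: "(exp s + exp(-s))*(exp t+exp(-t)) = (exp t + exp(-t))*(exp s+exp(-s))" by (rule mult.commute)
  show "FF (t,s) \<ge> \<bar>t\<bar>" unfolding FF_def fst_conv snd_conv by (rule lin[OF A[of t] C[of t s]])
  show "FF (t,s) \<ge> \<bar>s\<bar>" unfolding FF_def fst_conv snd_conv using lin[OF A[of s] C[of s t]] cm by simp
  show "FF (t,s) \<ge> 4" unfolding FF_def fst_conv snd_conv by (rule lin2[OF B[of t] C[of t s]])
  show "FF (0,0) = 4" by (simp add: FF_def)
qed



definition KK :: "real \<Rightarrow> (real \<times> real) set" where
  "KK k = {p. FF p \<le> k}"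

lemma KK_convex: "convex (KK k)"
proof (rule convexI)
  fix x y :: "real \<times> real" and u v :: real
  assume x: "x \<in> KK k" and y: "y \<in> KK k" and u: "0 \<le> u" "0 \<le> v" "u + v = 1"
  have uv: "u = 1 - v" using u by simp
  have "FF ((1-v) *\<^sub>R x + v *\<^sub>R y) \<le> (1-v) * FF x + v * FF y"
    by (rule FF_convex) (use u in auto)
  also have "\<dots> \<le> (1-v) * k + v * k"
    using x y u by (intro add_mono mult_left_mono) (auto simp: KK_def)
  also have "\<dots> = k" by (simp add: algebra_simps)
  finally show "u *\<^sub>R x + v *\<^sub>R y \<in> KK k" by (simp add: KK_def uv)
qed

lemma KK_bounded: "bounded (KK k)"
  unfolding bounded_iff
proof (intro exI ballI)
  fix p assume p: "p \<in> KK k"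
  obtain t s where ts: "p = (t,s)" by (cases p)
  have "norm p \<le> norm t + norm s" unfolding ts by (rule norm_Pair_le)
  also have "\<dots> \<le> k + k" using FF_ge(1)[where t=t and s=s] FF_ge(2)[where t=t and s=s] p by (auto simp: KK_def ts)
  finally show "norm p \<le> 2*k" by simp
qed

lemma KK_closed: "closed (KK k)"
  unfolding KK_def by (rule closed_Collect_le) (auto intro: FF_cont continuous_intros)

lemma KK_open_sub: "{p. FF p < k} \<subseteq> interior (KK k)"
  by (rule interior_maximal) (auto simp: KK_def intro!: open_Collect_less FF_cont continuous_intros)

lemma KK_interior_ne: "k > 4 \<Longrightarrow> interior (KK k) \<noteq> {}"
proof -
  assume "k > 4"
  then have "(0,0) \<in> {p. FF p < k}" using FF_ge(4) by simp
  then show ?thesis using KK_open_sub[of k] by blast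
qed

lemma KK_frontier:
  assumes k: "k > 4"
  shows "frontier (KK k) = {p. FF p = k}"
proof
  show "frontier (KK k) \<subseteq> {p. FF p = k}"
  proof
    fix p assume p: "p \<in> frontier (KK k)"
    then have "p \<in> KK k" "p \<notin> interior (KK k)" using KK_closed by (auto simp: frontier_def)
    then show "p \<in> {p. FF p = k}" using KK_open_sub[of k] by (force simp: KK_def)
  qed
next
  show "{p. FF p = k} \<subseteq> frontier (KK k)"
  proof
    fix p assume "p \<in> {p. FF p = k}"
    then have fp: "FF p = k" by simp
    have "p \<notin> interior (KK k)"
    proof
      assume "p \<in> interior (KK k)"
      then obtain e where e: "e > 0" "ball p e \<subseteq> KK k" by (auto simp: mem_interior)
      have p0: "p \<noteq> 0" using fp k FF_ge(4) by (auto simp: zero_prod_def)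
      then have np: "norm p > 0" by simp
      define d where "d = e / (2 * norm p)"
      have d: "d > 0" using e np by (simp add: d_def)
      define q where "q = (1 + d) *\<^sub>R p"
      have "dist p q = d * norm p" unfolding q_def dist_norm
        by (simp add: algebra_simps d) (metis abs_of_pos d norm_minus_cancel)
      also have "\<dots> = e/2" using np by (simp add: d_def)
      finally have "q \<in> ball p e" using e by simp
      then have fq: "FF q \<le> k" using e by (auto simp: KK_def)
      define u where "u = 1 / (1 + d)"
      have u: "0 < u" "u < 1" using d by (auto simp: u_def)
      have pq: "p = (1-u) *\<^sub>R 0 + u *\<^sub>R q" using d by (simp add: u_def q_def)
      have "FF p \<le> (1-u) * FF 0 + u * FF q"
        unfolding pq by (rule FF_convex) (use u in auto)
      also have "FF 0 = 4" using FF_ge(4) by (simp add: zero_prod_def)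
      finally have "k \<le> (1-u)*4 + u*k" using fq u fp
        by (smt (verit) mult_left_mono)
      then have "(1-u)*k \<le> (1-u)*4" by (simp add: algebra_simps)
      moreover have "(1-u)*4 < (1-u)*k" using u k by (intro mult_strict_left_mono) auto
      ultimately show False by linarith
    qed
    moreover have "p \<in> KK k" using fp by (simp add: KK_def)
    ultimately show "p \<in> frontier (KK k)" using KK_closed by (simp add: frontier_def)
  qed
qed

lemma KK_sphere:
  assumes k: "k > 4"
  shows "{p. FF p = k} homeomorphic sphere (0::real\<times>real) 1"
proof -
  have ne: "interior (KK k) \<noteq> {}" using KK_interior_ne[OF k] .
  have aff: "aff_dim (KK k) = aff_dim (cball (0::real\<times>real) 1)"
  proof -
    have "aff_dim (interior (KK k)) = int DIM(real\<times>real)" by (rule aff_dim_open) (use ne in auto)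
    moreover have "aff_dim (interior (KK k)) \<le> aff_dim (KK k)" by (rule aff_dim_subset[OF interior_subset])
    moreover have "aff_dim (KK k) \<le> int DIM(real\<times>real)" by (rule aff_dim_le_DIM)
    ultimately show ?thesis using aff_dim_cball[of 1 "0::real\<times>real"] by simp
  qed
  have "rel_frontier (KK k) homeomorphic rel_frontier (cball (0::real\<times>real) 1)"
    by (rule homeomorphic_rel_frontiers_convex_bounded_sets) (auto simp: KK_convex KK_bounded aff)
  then show ?thesis using rel_frontier_nonempty_interior[OF ne] KK_frontier[OF k] by simp
qed



lemma key_identity:
  fixes A B E F :: real
  assumes "E > 0" "F > 0"
  shows "((B*E)^2 + B^2)*((A*F)^2 + A^2) - (B*E)*(A*F) = E*F*A*B*(A*B*((E+1/E)*(F+1/F)) - 1)"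
  using assms by (simp add: field_simps power2_eq_square)

lemma level_Phi:
  fixes a b t s :: real
  assumes a: "a > 0" and b: "b > 0"
  shows "V b a (sqrt b * exp t, sqrt a * exp s) = -(a*b) \<longleftrightarrow> FF (t,s) = 1/(sqrt a * sqrt b)"
proof -
  let ?A = "sqrt a" and ?B = "sqrt b" and ?E = "exp t" and ?F = "exp s"
  have A: "?A > 0" "?A^2 = a" using a by auto
  have B: "?B > 0" "?B^2 = b" using b by auto
  have FF: "FF (t,s) = (?E + 1/?E)*(?F + 1/?F)" by (simp add: FF_def exp_minus inverse_eq_divide)
  have "V b a (?B*?E, ?A*?F) = -(a*b) \<longleftrightarrow> ((?B*?E)^2 + ?B^2)*((?A*?F)^2 + ?A^2) - (?B*?E)*(?A*?F) = 0"
    using V_iff[of b a "?B*?E" "?A*?F"] A B by simp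
  also have "\<dots> \<longleftrightarrow> ?E*?F*?A*?B*(?A*?B*FF(t,s) - 1) = 0"
    unfolding key_identity[OF exp_gt_zero exp_gt_zero] FF ..
  also have "\<dots> \<longleftrightarrow> ?A*?B*FF(t,s) = 1" using A B by simp
  also have "\<dots> \<longleftrightarrow> FF (t,s) = 1/(?A*?B)" using A B by (auto simp: field_simps)
  finally show ?thesis .
qed

lemma C1_oval:
  fixes a b :: real
  assumes a: "a > 0" and b: "b > 0" and ab: "a*b < 1/16"
  shows "{p. V b a p = -(a*b) \<and> fst p > 0} homeomorphic sphere (0::real\<times>real) 1"
proof -
  let ?A = "sqrt a" and ?B = "sqrt b"
  define k where "k = 1/(?A*?B)"
  have AB: "?A*?B = sqrt (a*b)" by (simp add: real_sqrt_mult)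
  have "sqrt (a*b) < sqrt (1/16)" using ab by (simp only: real_sqrt_less_iff)
  also have "sqrt (1/16) = (1/4::real)" by (simp add: real_sqrt_divide)
  finally have s4: "?A*?B < 1/4" using AB by simp
  have pAB: "?A*?B > 0" using a b by simp
  have k4: "k > 4" unfolding k_def using s4 pAB by (simp add: field_simps)
  let ?C = "{p. V b a p = -(a*b) \<and> fst p > 0}"
  have pos: "snd p > 0" if "p \<in> ?C" for p
  proof -
    obtain x y where p: "p = (x,y)" by (cases p)
    have L: "(x^2+b)*(y^2+a) = x*y" using that V_iff[of b a x y] by (simp add: p)
    have "(x^2+b)*(y^2+a) > 0" using a b by (intro mult_pos_pos add_nonneg_pos) auto
    then have "x*y > 0" using L by simp
    then show ?thesis using that p by (simp add: zero_less_mult_iff)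
  qed
  let ?Phi = "\<lambda>(t,s). (?B * exp t, ?A * exp s)"
  let ?Psi = "\<lambda>(x,y). (ln (x/?B), ln (y/?A))"
  have h1: "?Phi p \<in> ?C \<and> ?Psi (?Phi p) = p" if p: "p \<in> {p. FF p = k}" for p
  proof -
    obtain t s where ts: "p = (t,s)" by (cases p)
    have "?Phi p \<in> ?C" using p level_Phi[OF a b, of t s] b by (simp add: ts k_def)
    moreover have "?Psi (?Phi p) = p" using a b by (simp add: ts)
    ultimately show ?thesis by blast
  qed
  have h2: "?Psi p \<in> {p. FF p = k} \<and> ?Phi (?Psi p) = p" if p: "p \<in> ?C" for p
  proof -
    obtain x y where xy: "p = (x,y)" by (cases p)
    have x: "x > 0" using p xy by simp
    have y: "y > 0" using pos[OF p] xy by simp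
    have pp: "?Phi (?Psi p) = p" using x y a b by (simp add: xy)
    have "V b a (?Phi (?Psi p)) = -(a*b)" using pp p by simp
    then have "FF (?Psi p) = k" using level_Phi[OF a b, of "ln (x/?B)" "ln (y/?A)"]
      by (simp add: xy k_def)
    then show ?thesis using pp by simp
  qed
  have c1: "continuous_on {p. FF p = k} ?Phi"
    by (simp add: case_prod_unfold) (intro continuous_intros)
  have pos2: "\<forall>p\<in>?C. fst p / ?B > 0 \<and> snd p / ?A > 0"
    using pos a b by auto
  have "continuous_on ?C (\<lambda>p. (ln (fst p/?B), ln (snd p/?A)))"
  proof (rule continuous_at_imp_continuous_on, rule ballI)
    fix p assume "p \<in> ?C"
    note hh = bspec[OF pos2 this]
    note h = conjunct1[OF hh] conjunct2[OF hh]
    show "isCont (\<lambda>p. (ln (fst p/?B), ln (snd p/?A))) p"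
      by (intro continuous_intros) (use h in auto)
  qed
  then have c2: "continuous_on ?C ?Psi" by (simp add: case_prod_unfold)
  have "{p. FF p = k} homeomorphic ?C"
    unfolding homeomorphic_minimal
    by (rule exI[of _ ?Phi], rule exI[of _ ?Psi]) (use h1 h2 c1 c2 in blast)
  then show ?thesis using KK_sphere[OF k4] homeomorphic_sym homeomorphic_trans by blast
qed



theorem lemma5:
  fixes a b :: real
  assumes "a > 0" and "b > 0"
  shows "((\<exists>p. period2 (Gba b a) p) \<longleftrightarrow> (0 < a * b \<and> a * b < 1/16))
       \<and> (0 < a * b \<and> a * b < 1/16 \<longrightarrow>
           {p. period2 (Gba b a) p} = {p. V b a p = - (a * b)}
         \<and> two_ovals {p. V b a p = - (a * b)})"
proof -
  note a = assms(1) and b = assms(2)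
  have ab0: "0 < a*b" using a b by simp
  have P1: "V b a p = -(a*b) \<and> a*b < 1/16" if P: "period2 (Gba b a) p" for p
  proof -
    obtain x y where p: "p = (x,y)" by (cases p)
    have L: "(x^2+b)*(y^2+a) = x*y" using per2_level[OF a b] P p by simp
    have le: "16*a*b \<le> 1" using level_bound(1)[OF a b L] .
    have "16*a*b \<noteq> 1"
    proof
      assume e: "16*a*b = 1"
      have sq: "x^2 = b" "y^2 = a" using level_bound(2)[OF a b L e] by auto
      have x0: "x \<noteq> 0" "y \<noteq> 0" using level_G(1,2)[OF a b L] by auto
      have "b/x = x" "a/y = y" using sq x0 by (auto simp: field_simps power2_eq_square)
      then have "Gba b a p = p" using level_G(3)[OF a b L] p by simp
      then show False using P by (simp add: period2_def)
    qed
    then show ?thesis using le L V_iff[of b a x y] p by simp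
  qed
  have P2: "period2 (Gba b a) p" if ab: "a*b < 1/16" and Vp: "V b a p = -(a*b)" for p
  proof -
    obtain x y where p: "p = (x,y)" by (cases p)
    have L: "(x^2+b)*(y^2+a) = x*y" using Vp V_iff[of b a x y] p by simp
    have x0: "x \<noteq> 0" "y \<noteq> 0" using level_G(1,2)[OF a b L] by auto
    have g1: "Gba b a p = (b/x, a/y)" using level_G(3)[OF a b L] p by simp
    have g2: "Gba b a (b/x, a/y) = (b/(b/x), a/(a/y))"
      using level_G(3)[OF a b level_sym[OF a b L]] .
    have g2': "Gba b a (b/x, a/y) = (x,y)" using g2 x0 a b by simp
    have ne: "(b/x, a/y) \<noteq> (x,y)"
    proof
      assume "(b/x, a/y) = (x,y)"
      then have "b = x^2" "a = y^2" using x0 by (auto simp: field_simps power2_eq_square)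
      then have e4: "4*(a*b) = x*y" using L by (simp add: algebra_simps)
      have "16*(a*b)*(a*b) = (4*(a*b))^2" by (simp add: power2_eq_square)
      also have "\<dots> = (x*y)^2" using e4 by simp
      also have "\<dots> = x^2*y^2" by (rule power_mult_distrib)
      also have "\<dots> = 1*(a*b)" using \<open>b = x^2\<close> \<open>a = y^2\<close> by simp
      finally have "16*(a*b)*(a*b) = 1*(a*b)" .
      then have "16*(a*b) = 1" using ab0 by (metis mult_right_cancel less_irrefl)
      then show False using ab by simp
    qed
    show ?thesis unfolding period2_def using g1 g2' ne p by simp
  qed
  have TO: "two_ovals {p. V b a p = - (a * b)}" if ab: "a*b < 1/16"
  proof -
    let ?C1 = "{p. V b a p = -(a*b) \<and> fst p > 0}"
    let ?C2 = "{p. V b a p = -(a*b) \<and> fst p < 0}"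
    have o1: "oval ?C1" unfolding oval_def by (rule C1_oval[OF a b ab])
    have Vm: "\<And>p. V b a (-p) = V b a p" by (simp add: V_def)
    have "?C2 homeomorphic ?C1" unfolding homeomorphic_minimal
      by (rule exI[of _ uminus], rule exI[of _ uminus]) (auto simp: Vm intro!: continuous_intros)
    then have o2: "oval ?C2" using o1 unfolding oval_def using homeomorphic_trans by blast
    have un: "{p. V b a p = - (a * b)} = ?C1 \<union> ?C2"
    proof (rule set_eqI)
      fix p :: "real \<times> real"
      obtain x y where p: "p = (x,y)" by (cases p)
      have "x \<noteq> 0" if Vp: "V b a (x,y) = -(a*b)"
      proof
        assume "x = 0"
        then have "V b a (x,y) = b*y^2" by (simp add: V_def)
        moreover have "b*y^2 \<ge> 0" using b by simp
        ultimately show False using Vp ab0 by linarith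
      qed
      then show "p \<in> {p. V b a p = - (a * b)} \<longleftrightarrow> p \<in> ?C1 \<union> ?C2"
        unfolding p by auto
    qed
    show ?thesis unfolding two_ovals_def
      by (rule exI[of _ ?C1], rule exI[of _ ?C2]) (use o1 o2 un in auto)
  qed
  have EX: "\<exists>p. period2 (Gba b a) p" if ab: "a*b < 1/16"
  proof -
    have hC: "{p. V b a p = -(a*b) \<and> fst p > 0} homeomorphic sphere (0::real\<times>real) 1"
      by (rule C1_oval[OF a b ab])
    have "(1,0) \<in> sphere (0::real\<times>real) 1" by simp
    then have "sphere (0::real\<times>real) 1 \<noteq> {}" by blast
    then have "{p. V b a p = -(a*b) \<and> fst p > 0} \<noteq> {}"
    proof (intro notI)
      assume E: "{p. V b a p = -(a*b) \<and> fst p > 0} = {}"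
      have "sphere (0::real\<times>real) 1 = {}" using hC unfolding E by simp
      moreover assume "sphere (0::real\<times>real) 1 \<noteq> {}"
      ultimately show False by simp
    qed
    then obtain p where "V b a p = -(a*b)" by blast
    then show ?thesis using P2[OF ab] by blast
  qed
  show ?thesis using P1 P2 TO EX ab0 by blast
qed

end
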